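(* Let $X_1,\dots,X_n$ be i.i.d. copies of a non-negative absolutely continuous random variable $X$. Let $\tau_{1|n}(\mathbf X)=\max\{X_1,\dots,X_n\}$ (parallel system), $(\tau_{1|n}(\mathbf X))_t=(\tau_{1|n}(\mathbf X)-t\mid\tau_{1|n}(\mathbf X)>t)$, and $\tau_{1|n}(\mathbf X_t)$ the lifetime of the parallel system built from $n$ independent used components with lifetimes distributed as $(X_i-t\mid X_i>t)$. Then for any fixed $t\ge0$, $\tau_{1|n}(\mathbf X_t)\underset{b}{\prec}(\tau_{1|n}(\mathbf X))_t$.
   Context: All random variables are non-negative and absolutely continuous with support $[0,\infty)$. For a random variable $W$: density $f_W$, cdf $F_W$, reversed hazard rate $\tilde r_W=f_W/F_W$. $U\underset{b}{\prec}V$ means $\tilde r_U(x)/\tilde r_V(x)$ is decreasing (non-increasing) in $x\ge0$. *)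

theory Defs
  imports "HOL-Analysis.Analysis"
begin

text \<open>A lifetime distribution is described by its cdf G and a density g
  (functions on the reals, vanishing on the negative half-line).\<close>

definition is_density :: "(real \<Rightarrow> real) \<Rightarrow> (real \<Rightarrow> real) \<Rightarrow> bool" where
  "is_density g G \<longleftrightarrow> (\<forall>x. 0 \<le> g x) \<and> (\<forall>x. (g has_integral G x) {..x})"

definition rhr :: "(real \<Rightarrow> real) \<Rightarrow> (real \<Rightarrow> real) \<Rightarrow> real \<Rightarrow> real" where
  "rhr g G x = g x / G x"

text \<open>U \<prec>_b V: the ratio of reversed hazard rates r_U / r_V is non-increasing.
  Both cdfs vanish at 0, so the ratio is only meaningful for x > 0.\<close>
definition rh_ratio_order ::
  "(real \<Rightarrow> real) \<Rightarrow> (real \<Rightarrow> real) \<Rightarrow> (real \<Rightarrow> real) \<Rightarrow> (real \<Rightarrow> real) \<Rightarrow> bool" where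
  "rh_ratio_order gU GU gV GV \<longleftrightarrow>
     (\<forall>x y. 0 < x \<longrightarrow> x \<le> y \<longrightarrow> rhr gU GU y / rhr gV GV y \<le> rhr gU GU x / rhr gV GV x)"

definition par_cdf :: "(real \<Rightarrow> real) \<Rightarrow> nat \<Rightarrow> real \<Rightarrow> real" where
  "par_cdf G n x = G x ^ n"

definition par_pdf :: "(real \<Rightarrow> real) \<Rightarrow> (real \<Rightarrow> real) \<Rightarrow> nat \<Rightarrow> real \<Rightarrow> real" where
  "par_pdf g G n x = real n * G x ^ (n - 1) * g x"

definition residual_cdf :: "(real \<Rightarrow> real) \<Rightarrow> real \<Rightarrow> real \<Rightarrow> real" where
  "residual_cdf G t x = (if x < 0 then 0 else (G (t + x) - G t) / (1 - G t))"

definition residual_pdf :: "(real \<Rightarrow> real) \<Rightarrow> (real \<Rightarrow> real) \<Rightarrow> real \<Rightarrow> real \<Rightarrow> real" where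
  "residual_pdf g G t x = (if x < 0 then 0 else g (t + x) / (1 - G t))"

end

theory Submission
  imports Defs
begin

lemma integral_pos:
  fixes f :: "real \<Rightarrow> real"
  assumes int: "f integrable_on {x..y}" and xy: "x < y"
    and nn: "\<And>s. s \<in> {x..y} \<Longrightarrow> 0 \<le> f s" and pos: "\<And>s. s \<in> {x<..y} \<Longrightarrow> 0 < f s"
  shows "0 < integral {x..y} f"
proof -
  have af: "f absolutely_integrable_on {x..y}"
    using nonnegative_absolutely_integrable_1 int nn by blast
  have ge: "0 \<le> integral {x..y} f"
    by (rule integral_nonneg) (use int nn in auto)
  have False if z: "integral {x..y} f = 0"
  proof -
    have "set_lebesgue_integral lebesgue {x..y} f = 0"
      using set_lebesgue_integral_eq_integral(2)[OF af] z by simp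
    then have "AE s in lebesgue. indicator {x..y} s *\<^sub>R f s = 0"
      unfolding set_lebesgue_integral_def
      by (subst (asm) integral_nonneg_eq_0_iff_AE)
         (use af nn in \<open>auto simp: set_integrable_def indicator_def\<close>)
    then obtain N where N: "N \<in> null_sets lebesgue"
      "{s \<in> space lebesgue. \<not> (indicator {x..y} s *\<^sub>R f s = 0)} \<subseteq> N"
      by (rule AE_E) blast
    have sub: "{x<..y} \<subseteq> N" using N(2) pos
      by (force simp: indicator_def)
    have "emeasure lebesgue {x<..y} = 0"
      using null_sets_subset[OF N(1) _ sub] by auto
    then show False using xy by simp
  qed
  then show ?thesis using ge by force
qed


lemma zero_var:
  fixes D F :: "real \<Rightarrow> real"
  assumes ab: "a \<le> b"
    and mono: "\<And>u v. u \<in> {a..b} \<Longrightarrow> v \<in> {a..b} \<Longrightarrow> u \<le> v \<Longrightarrow> F u \<le> F v"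
    and loc: "\<And>c \<delta>. c \<in> {a..b} \<Longrightarrow> 0 < \<delta> \<Longrightarrow> \<exists>\<eta>>0. \<forall>u\<in>{a..b}. \<forall>v\<in>{a..b}.
                 \<bar>u - c\<bar> < \<eta> \<longrightarrow> \<bar>v - c\<bar> < \<eta> \<longrightarrow> u \<le> v \<longrightarrow> \<bar>D v - D u\<bar> \<le> \<delta> * (F v - F u)"
  shows "D b = D a"
proof -
  have key: "\<bar>D b - D a\<bar> \<le> \<delta> * (F b - F a)" if \<delta>: "0 < \<delta>" for \<delta>
  proof -
    define R where "R x y \<longleftrightarrow> (\<forall>u v. min x y \<le> u \<longrightarrow> u \<le> v \<longrightarrow> v \<le> max x y \<longrightarrow>
        \<bar>D v - D u\<bar> \<le> \<delta> * (F v - F u))" for x y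
    have "R a b"
    proof (rule connected_equivalence_relation[of "{a..b}"])
      show "connected {a..b}" by simp
      show "a \<in> {a..b}" "b \<in> {a..b}" using ab by auto
      show "R y x" if "R x y" for x y using that unfolding R_def by (simp add: min.commute max.commute)
      show "R x z" if Rxy: "R x y" and Ryz: "R y z" and xyz: "x \<in> {a..b}" "y \<in> {a..b}" "z \<in> {a..b}" for x y z
        unfolding R_def
      proof (intro allI impI)
        fix u v assume uv: "min x z \<le> u" "u \<le> v" "v \<le> max x z"
        show "\<bar>D v - D u\<bar> \<le> \<delta> * (F v - F u)"
        proof (cases "u < y \<and> y < v")
          case False
          then have "(min x y \<le> u \<and> v \<le> max x y) \<or> (min y z \<le> u \<and> v \<le> max y z)"
            using uv by linarith
          then show ?thesis using Rxy Ryz uv unfolding R_def by blast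
        next
          case True
          then have "(min x y \<le> u \<and> y \<le> max x y \<and> min y z \<le> y \<and> v \<le> max y z) \<or>
                     (min y z \<le> u \<and> y \<le> max y z \<and> min x y \<le> y \<and> v \<le> max x y)"
            using uv by linarith
          then have "\<bar>D y - D u\<bar> \<le> \<delta> * (F y - F u) \<and> \<bar>D v - D y\<bar> \<le> \<delta> * (F v - F y)"
            using Rxy Ryz True unfolding R_def by (meson less_imp_le)
          then show ?thesis by (simp add: algebra_simps) linarith
        qed
      qed
      show "\<exists>T. openin (top_of_set {a..b}) T \<and> c \<in> T \<and> (\<forall>x\<in>T. R c x)" if c: "c \<in> {a..b}" for c
      proof -
        obtain \<eta> where \<eta>: "\<eta> > 0" and H: "\<forall>u\<in>{a..b}. \<forall>v\<in>{a..b}.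
                 \<bar>u - c\<bar> < \<eta> \<longrightarrow> \<bar>v - c\<bar> < \<eta> \<longrightarrow> u \<le> v \<longrightarrow> \<bar>D v - D u\<bar> \<le> \<delta> * (F v - F u)"
          using loc[OF c \<delta>] by blast
        have "openin (top_of_set {a..b}) ({a..b} \<inter> ball c \<eta>)"
          by (rule openin_open_Int) simp
        moreover have "c \<in> {a..b} \<inter> ball c \<eta>" using c \<eta> by simp
        moreover have "R c x" if "x \<in> {a..b} \<inter> ball c \<eta>" for x
          unfolding R_def
        proof (intro allI impI)
          fix u v assume uv: "min c x \<le> u" "u \<le> v" "v \<le> max c x"
          have x: "x \<in> {a..b}" "\<bar>x - c\<bar> < \<eta>" using that by (auto simp: dist_real_def)
          have "u \<in> {a..b}" "v \<in> {a..b}" "\<bar>u - c\<bar> < \<eta>" "\<bar>v - c\<bar> < \<eta>"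
            using uv x c by auto
          then show "\<bar>D v - D u\<bar> \<le> \<delta> * (F v - F u)" using H uv(2) by blast
        qed
        ultimately show ?thesis by blast
      qed
    qed
    then show ?thesis using ab unfolding R_def by auto
  qed
  show ?thesis
  proof (rule ccontr)
    assume ne: "D b \<noteq> D a"
    define d where "d = \<bar>D b - D a\<bar>"
    have d: "d > 0" using ne by (simp add: d_def)
    have Fab: "F a \<le> F b" using mono ab by auto
    define \<delta> where "\<delta> = d / (2 * (F b - F a + 1))"
    have "\<delta> > 0" using d Fab by (simp add: \<delta>_def)
    from key[OF this] have "d \<le> \<delta> * (F b - F a)" by (simp add: d_def)
    moreover have "\<delta> * (F b - F a) < d"
      using d Fab by (simp add: \<delta>_def field_simps) (smt (verit) mult_left_mono)
    ultimately show False by simp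
  qed
qed


lemma pow_bounds:
  fixes p q :: real assumes p: "0 \<le> p" and pq: "p \<le> q"
  shows "real n * p^(n-1) * (q-p) \<le> q^n - p^n \<and> q^n - p^n \<le> real n * q^(n-1) * (q-p)"
proof (cases n)
  case 0 then show ?thesis by simp
next
  case (Suc m)
  have eq: "q^Suc m - p^Suc m = (q-p) * (\<Sum>k<Suc m. q^k * p^(m-k))" by (rule diff_power_eq_sum)
  have lo: "(\<Sum>k<Suc m. p^m) \<le> (\<Sum>k<Suc m. q^k * p^(m-k))"
  proof (rule sum_mono)
    fix k assume "k \<in> {..<Suc m}"
    then have "p^m = p^k * p^(m-k)" by (simp add: power_add[symmetric])
    also have "\<dots> \<le> q^k * p^(m-k)" using p pq by (intro mult_right_mono power_mono) auto
    finally show "p^m \<le> q^k * p^(m-k)" .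
  qed
  have hi: "(\<Sum>k<Suc m. q^k * p^(m-k)) \<le> (\<Sum>k<Suc m. q^m)"
  proof (rule sum_mono)
    fix k assume "k \<in> {..<Suc m}"
    have "q^k * p^(m-k) \<le> q^k * q^(m-k)" using p pq by (intro mult_left_mono power_mono) auto
    also have "\<dots> = q^m" using \<open>k \<in> {..<Suc m}\<close> by (simp add: power_add[symmetric])
    finally show "q^k * p^(m-k) \<le> q^m" .
  qed
  have qp: "0 \<le> q - p" using pq by simp
  show ?thesis
    using mult_left_mono[OF lo qp] mult_left_mono[OF hi qp] unfolding eq Suc
    by (simp add: algebra_simps)
qed

lemma chain:
  fixes h :: "real \<Rightarrow> real" and c a b :: real and n :: nat
  assumes ab: "a \<le> b" and hint: "h integrable_on {a..b}"
    and hnn: "\<And>s. s \<in> {a..b} \<Longrightarrow> 0 \<le> h s" and c: "0 \<le> c"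
  shows "((\<lambda>s. real n * (c + integral {a..s} h)^(n-1) * h s) has_integral
           ((c + integral {a..b} h)^n - c^n)) {a..b}"
proof -
  define H where "H s = c + integral {a..s} h" for s
  have Hcont: "continuous_on {a..b} H"
    unfolding H_def by (intro continuous_intros indefinite_integral_continuous_1 hint)
  have hsub: "h integrable_on {u..v}" if "a \<le> u" "v \<le> b" for u v
    using integrable_on_subinterval[OF hint] that by auto
  have Hdiff: "H v - H u = integral {u..v} h" if "a \<le> u" "u \<le> v" "v \<le> b" for u v
    using Henstock_Kurzweil_Integration.integral_combine[where a=a and c=u and b=v and f=h] hsub[of a v] that by (simp add: H_def)
  have Hmono: "H u \<le> H v" if "a \<le> u" "u \<le> v" "v \<le> b" for u v
  proof -
    have "0 \<le> integral {u..v} h"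
      by (rule integral_nonneg) (use hsub[of u v] that hnn in auto)
    then show ?thesis using Hdiff[OF that] by simp
  qed
  have Ha: "H a = c" by (simp add: H_def)
  have Hnn: "0 \<le> H s" if "s \<in> {a..b}" for s
    using Hmono[of a s] that Ha c by auto
  define g where "g s = real n * H s ^ (n-1) * h s" for s
  have gabs: "g absolutely_integrable_on {a..b}"
  proof -
    have cont: "continuous_on {a..b} (\<lambda>s. real n * H s ^ (n-1))"
      by (intro continuous_intros Hcont)
    have "(\<lambda>s. (real n * H s ^ (n-1)) * h s) absolutely_integrable_on {a..b}"
    proof (rule absolutely_integrable_bounded_measurable_product_real)
      show "(\<lambda>s. real n * H s ^ (n-1)) \<in> borel_measurable (lebesgue_on {a..b})"
        by (rule continuous_imp_measurable_on_sets_lebesgue[OF cont]) simp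
      show "{a..b} \<in> sets lebesgue" by simp
      show "bounded ((\<lambda>s. real n * H s ^ (n-1)) ` {a..b})"
        by (rule compact_imp_bounded, rule compact_continuous_image[OF cont]) simp
      show "h absolutely_integrable_on {a..b}"
        using nonnegative_absolutely_integrable_1 hint hnn by blast
    qed
    then show ?thesis by (simp add: g_def[abs_def])
  qed
  have gint: "g integrable_on {a..b}"
    using gabs set_lebesgue_integral_eq_integral(1) by blast
  have gsub: "g integrable_on {u..v}" if "a \<le> u" "v \<le> b" for u v
    using integrable_on_subinterval[OF gint] that by auto
  define D where "D x = integral {a..x} g - H x ^ n" for x
  have est: "\<bar>D v - D u\<bar> \<le> real n * (H v^(n-1) - H u^(n-1)) * (H v - H u)"
    if uv: "a \<le> u" "u \<le> v" "v \<le> b" for u v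
  proof -
    have Ig: "integral {a..v} g - integral {a..u} g = integral {u..v} g"
      using Henstock_Kurzweil_Integration.integral_combine[where a=a and c=u and b=v and f=g] gsub[of a v] uv by simp
    have hI: "(h has_integral (H v - H u)) {u..v}"
      using Hdiff[OF uv] hsub[of u v] uv by (simp add: has_integral_integral)
    have gI: "(g has_integral integral {u..v} g) {u..v}"
      using gsub[of u v] uv by (simp add: has_integral_integral)
    have low: "real n * H u^(n-1) * (H v - H u) \<le> integral {u..v} g"
    proof (rule has_integral_le[OF _ gI])
      show "((\<lambda>s. real n * H u^(n-1) * h s) has_integral real n * H u^(n-1) * (H v - H u)) {u..v}"
        by (rule has_integral_mult_right[OF hI])
      fix s assume s: "s \<in> {u..v}"
      have "H u^(n-1) \<le> H s^(n-1)"
        using Hnn[of u] Hmono[of u s] s uv by (intro power_mono) auto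
      then show "real n * H u^(n-1) * h s \<le> g s"
        unfolding g_def using hnn[of s] s uv by (intro mult_right_mono mult_left_mono) auto
    qed
    have up: "integral {u..v} g \<le> real n * H v^(n-1) * (H v - H u)"
    proof (rule has_integral_le[OF gI])
      show "((\<lambda>s. real n * H v^(n-1) * h s) has_integral real n * H v^(n-1) * (H v - H u)) {u..v}"
        by (rule has_integral_mult_right[OF hI])
      fix s assume s: "s \<in> {u..v}"
      have "H s^(n-1) \<le> H v^(n-1)"
        using Hnn[of s] Hmono[of s v] s uv by (intro power_mono) auto
      then show "g s \<le> real n * H v^(n-1) * h s"
        unfolding g_def using hnn[of s] s uv by (intro mult_right_mono mult_left_mono) auto
    qed
    have pb: "real n * H u^(n-1) * (H v - H u) \<le> H v^n - H u^n \<and> H v^n - H u^n \<le> real n * H v^(n-1) * (H v - H u)"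
      by (rule pow_bounds) (use Hnn[of u] Hmono[OF uv] uv in auto)
    have Deq: "D v - D u = integral {u..v} g - (H v^n - H u^n)"
      unfolding D_def using Ig by simp
    have e2: "real n * (H v^(n-1) - H u^(n-1)) * (H v - H u) = real n * H v^(n-1) * (H v - H u) - real n * H u^(n-1) * (H v - H u)"
      by (simp add: algebra_simps)
    show ?thesis unfolding abs_le_iff e2 Deq using low up pb by linarith
  qed
  have "D b = D a"
  proof (rule zero_var[OF ab, where F = H])
    show "H u \<le> H v" if "u \<in> {a..b}" "v \<in> {a..b}" "u \<le> v" for u v
      using Hmono that by auto
    fix z \<delta> :: real assume z: "z \<in> {a..b}" and \<delta>: "0 < \<delta>"
    have "continuous_on {a..b} (\<lambda>s. H s ^ (n-1))" by (intro continuous_intros Hcont)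
    then obtain \<eta> where \<eta>: "\<eta> > 0" and Hc: "\<forall>x'\<in>{a..b}. dist x' z < \<eta> \<longrightarrow>
        dist (H x' ^ (n-1)) (H z ^ (n-1)) < \<delta> / (2 * (real n + 1))"
      using z \<delta> unfolding continuous_on_iff
      by (metis divide_pos_pos of_nat_0_le_iff add_nonneg_pos zero_less_one mult_pos_pos zero_less_numeral)
    show "\<exists>\<eta>>0. \<forall>u\<in>{a..b}. \<forall>v\<in>{a..b}. \<bar>u - z\<bar> < \<eta> \<longrightarrow> \<bar>v - z\<bar> < \<eta> \<longrightarrow> u \<le> v \<longrightarrow>
                 \<bar>D v - D u\<bar> \<le> \<delta> * (H v - H u)"
    proof (intro exI[of _ \<eta>] conjI ballI impI \<eta>)
      fix u v assume u: "u \<in> {a..b}" and v: "v \<in> {a..b}" and uz: "\<bar>u - z\<bar> < \<eta>" and vz: "\<bar>v - z\<bar> < \<eta>"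
        and uv: "u \<le> v"
      define e where "e = \<delta> / (2 * (real n + 1))"
      define E where "E = \<delta> / (real n + 1)"
      have "\<bar>H u^(n-1) - H z^(n-1)\<bar> < e"
           "\<bar>H v^(n-1) - H z^(n-1)\<bar> < e"
        using Hc u v uz vz by (auto simp: dist_real_def e_def)
      moreover have "e + e = E" unfolding e_def E_def
        by (simp add: add_divide_distrib[symmetric] divide_simps)
      ultimately have dd: "H v^(n-1) - H u^(n-1) \<le> E"
        unfolding abs_less_iff by (elim conjE) linarith
      have dH: "0 \<le> H v - H u" using Hmono[of u v] u v uv by auto
      have "real n * (H v^(n-1) - H u^(n-1)) \<le> real n * (\<delta> / (real n + 1))"
        using dd unfolding E_def by (intro mult_left_mono) auto
      also have "\<dots> \<le> \<delta>" using \<delta> by (simp add: field_simps)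
      finally have "real n * (H v^(n-1) - H u^(n-1)) * (H v - H u) \<le> \<delta> * (H v - H u)"
        using dH by (intro mult_right_mono) auto
      then show "\<bar>D v - D u\<bar> \<le> \<delta> * (H v - H u)"
        using est[of u v] u v uv by auto
    qed
  qed
  then have "integral {a..b} g = H b ^ n - c ^ n"
    by (simp add: D_def Ha)
  then show ?thesis
    using gint by (simp add: has_integral_integral g_def[abs_def] H_def)
qed

lemma shift_int:
  fixes \<phi> :: "real \<Rightarrow> real"
  assumes "(\<phi> has_integral I) {t..t+x}"
  shows "((\<lambda>s. \<phi> (t + s)) has_integral I) {0..x}"
proof -
  have "((\<phi> \<circ> (+) t) has_integral I) {0..x}"
    using assms by (subst has_integral_shift_Icc_real) (simp add: add.commute)
  then show ?thesis by (simp add: o_def)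
qed

lemma extend_int:
  fixes g :: "real \<Rightarrow> real"
  assumes "(g has_integral I) {0..x}" "0 \<le> x" "\<And>s. s < 0 \<Longrightarrow> g s = 0"
  shows "(g has_integral I) {..x}"
proof -
  have sub: "{0..x} \<subseteq> {..x}" by auto
  have R: "((\<lambda>s. if s \<in> {0..x} then g s else 0) has_integral I) {..x}"
    using has_integral_restrict[OF sub] assms(1) by blast
  have EQ: "(if s \<in> {0..x} then g s else 0) = g s" if "s \<in> {..x}" for s
  proof (cases "s < 0")
    case True then show ?thesis using assms(3) by simp
  next
    case False then show ?thesis using that by simp
  qed
  have "((\<lambda>s. if s \<in> {0..x} then g s else 0) has_integral I) {..x} = (g has_integral I) {..x}"
    by (rule has_integral_cong) (rule EQ)
  with R show ?thesis by simp
qed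

lemma div_div_cancel: "(Q::real) \<noteq> 0 \<Longrightarrow> (X / Q) / (P / Q) = X / P"
  by simp

lemma gen_C: "(N::real) \<noteq> 0 \<Longrightarrow> \<phi> \<noteq> 0 \<Longrightarrow> d \<noteq> 0 \<Longrightarrow> q \<noteq> 0 \<Longrightarrow> S \<noteq> 0 \<Longrightarrow>
   (N*\<phi>/d) / (N*q*\<phi>/(d*S)) = S/q"
  by (simp add: divide_simps)

lemma ratio_eq:
  fixes a b \<phi> :: real and n :: nat
  assumes b: "0 \<le> b" "b < a" "b < 1" and \<phi>: "0 < \<phi>" and n: "1 \<le> n"
  shows "((real n * ((a-b)/(1-b))^(n - 1) * (\<phi>/(1-b))) / ((a-b)/(1-b))^n) /
         ((real n * a^(n - 1) * \<phi> / (1-b^n)) / ((a^n - b^n)/(1-b^n)))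
       = (\<Sum>p<n. (b/a)^(n - 1 - p))"
proof -
  obtain m where m: "n = Suc m" using n by (cases n) auto
  define r where "r = (a-b)/(1-b)"
  have r: "r > 0" using b by (simp add: r_def)
  have b1: "1 - b \<noteq> 0" using b by simp
  have a: "a > 0" using b by simp
  have bn: "1 - b^Suc m \<noteq> 0"
    using b power_less_one_iff[of b "Suc m"] by simp
  define S where "S = (\<Sum>p<Suc m. a^p * b^(m-p))"
  have eq: "a^Suc m - b^Suc m = (a-b) * S" unfolding S_def by (rule diff_power_eq_sum)
  have pos: "a^Suc m - b^Suc m > 0"
    using b power_strict_mono[of b a "Suc m"] by simp
  have "(a-b)*S > 0" using pos eq by simp
  then have S: "S > 0" using b by (simp add: zero_less_mult_iff)
  have A1: "(real (Suc m) * r^m * (\<phi>/(1-b))) / r^Suc m = real (Suc m) * \<phi> / ((1-b) * r)"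
    using r b1 by (simp add: divide_simps)
  have A2: "(1-b) * r = a - b" using b1 by (simp add: r_def)
  have A: "(real (Suc m) * r^m * (\<phi>/(1-b))) / r^Suc m = real (Suc m) * \<phi> / (a - b)"
    using A1 A2 by simp
  have B: "(real (Suc m) * a^m * \<phi> / (1-b^Suc m)) / ((a^Suc m - b^Suc m)/(1-b^Suc m))
         = real (Suc m) * a^m * \<phi> / ((a-b) * S)"
    unfolding div_div_cancel[OF bn] eq ..
  have C: "(real (Suc m) * \<phi> / (a - b)) / (real (Suc m) * a^m * \<phi> / ((a-b) * S)) = S / a^m"
    by (rule gen_C) (use a b \<phi> S in auto)
  have E: "S / a^m = (\<Sum>p<Suc m. (b/a)^(m - p))"
    unfolding S_def sum_divide_distrib
  proof (rule sum.cong[OF refl])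
    fix p assume "p \<in> {..<Suc m}"
    then have "a^m = a^p * a^(m-p)" by (simp add: power_add[symmetric])
    then show "a^p * b^(m-p) / a^m = (b/a)^(m-p)"
      using a by (simp add: power_divide)
  qed
  have "((real n * ((a-b)/(1-b))^(n - 1) * (\<phi>/(1-b))) / ((a-b)/(1-b))^n) /
         ((real n * a^(n - 1) * \<phi> / (1-b^n)) / ((a^n - b^n)/(1-b^n)))
     = ((real (Suc m) * r^m * (\<phi>/(1-b))) / r^Suc m) /
       ((real (Suc m) * a^m * \<phi> / (1-b^Suc m)) / ((a^Suc m - b^Suc m)/(1-b^Suc m)))"
    unfolding m diff_Suc_1 r_def ..
  also have "\<dots> = (real (Suc m) * \<phi> / (a - b)) / (real (Suc m) * a^m * \<phi> / ((a-b) * S))"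
    using A B by (rule arg_cong2[where f="(/)"])
  also have "\<dots> = S / a^m" by (rule C)
  also have "\<dots> = (\<Sum>p<Suc m. (b/a)^(m - p))" by (rule E)
  also have "\<dots> = (\<Sum>p<n. (b/a)^(n - 1 - p))" by (simp add: m)
  finally show ?thesis .
qed


theorem corollary5p2:
  fixes f F :: "real \<Rightarrow> real" and n :: nat and t :: real
  assumes dens: "is_density f F"
    and neg: "\<And>x. x < 0 \<Longrightarrow> f x = 0"
    and total: "(f has_integral 1) UNIV"
    and supp: "\<And>x. 0 < x \<Longrightarrow> 0 < f x"
    and n: "1 \<le> n"
    and t: "0 \<le> t"
  shows "is_density (par_pdf (residual_pdf f F t) (residual_cdf F t) n)
                    (par_cdf (residual_cdf F t) n)
       \<and> is_density (residual_pdf (par_pdf f F n) (par_cdf F n) t)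
                    (residual_cdf (par_cdf F n) t)
       \<and> rh_ratio_order (par_pdf (residual_pdf f F t) (residual_cdf F t) n)
                        (par_cdf (residual_cdf F t) n)
                        (residual_pdf (par_pdf f F n) (par_cdf F n) t)
                        (residual_cdf (par_cdf F n) t)"
proof -
  have fint: "f integrable_on {u..v}" for u v
    using integrable_on_subinterval[of f UNIV u v] total by (meson has_integral_integrable subset_UNIV)
  have fnn: "0 \<le> f x" for x using dens by (simp add: is_density_def)
  have Fint: "(f has_integral F x) {..x}" for x using dens by (simp add: is_density_def)
  have F0: "F x = 0" if x: "x \<le> 0" for x
  proof -
    have "((\<lambda>_. 0::real) has_integral F x) {..x}"
    proof (rule has_integral_spike[OF negligible_sing[of 0] _ Fint[of x]])
      fix s assume "s \<in> {..x} - {0}"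
      then have "s < 0" using x by auto
      then show "0 = f s" using neg by simp
    qed
    then show ?thesis by simp
  qed
  have Fint0: "F y = integral {0..y} f" if y: "0 \<le> y" for y
  proof -
    have "(f has_integral integral {0..y} f) {..y}"
      by (rule extend_int[OF _ y]) (use fint neg in \<open>auto simp: has_integral_integral\<close>)
    then show ?thesis using Fint[of y] has_integral_unique by blast
  qed
  have Fdiff: "F v - F u = integral {u..v} f" if "0 \<le> u" "u \<le> v" for u v
    using Henstock_Kurzweil_Integration.integral_combine[where a=0 and c=u and b=v and f=f]
      fint[of 0 v] Fint0[of u] Fint0[of v] that by simp
  have Fnn: "0 \<le> F x" for x
  proof (cases "x \<le> 0")
    case True then show ?thesis using F0 by simp
  next
    case False then show ?thesis using Fint0[of x] fnn
      by (simp add: integral_nonneg fint)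
  qed
  have Fle1: "F x \<le> 1" for x
    by (rule has_integral_subset_le[OF subset_UNIV Fint total]) (simp add: fnn)
  have Fstrict: "F u < F v" if "0 \<le> u" "u < v" for u v
  proof -
    have "0 < integral {u..v} f"
    proof (rule integral_pos[OF fint \<open>u < v\<close>])
      show "0 \<le> f s" for s by (rule fnn)
      show "0 < f s" if "s \<in> {u<..v}" for s using that \<open>0 \<le> u\<close> supp by simp
    qed
    then show ?thesis using Fdiff[of u v] that by simp
  qed
  have Fmono: "F u \<le> F v" if "u \<le> v" for u v
  proof (cases "u \<le> 0")
    case True then show ?thesis using F0 Fnn by simp
  next
    case False then show ?thesis using Fstrict[of u v] that by (cases "u = v") auto
  qed
  have Flt1: "F x < 1" for x
  proof -
    have "F x \<le> F (max x 0)" by (rule Fmono) simp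
    also have "\<dots> < F (max x 0 + 1)" by (rule Fstrict) auto
    also have "\<dots> \<le> 1" by (rule Fle1)
    finally show ?thesis .
  qed
  have c1: "0 < 1 - F t" using Flt1[of t] by simp
  have c2: "0 < 1 - F t ^ n"
    using power_less_one_iff[of "F t" n] Fnn[of t] Flt1[of t] n by simp

  have P1: "is_density (par_pdf (residual_pdf f F t) (residual_cdf F t) n)
                    (par_cdf (residual_cdf F t) n)"
    unfolding is_density_def
  proof (intro conjI allI)
    fix x :: real
    show "0 \<le> par_pdf (residual_pdf f F t) (residual_cdf F t) n x"
    proof (cases "x < 0")
      case True then show ?thesis by (simp add: par_pdf_def residual_pdf_def)
    next
      case False
      have "0 \<le> F (t + x) - F t" using Fmono[of t "t+x"] False by simp
      then show ?thesis using False c1 fnn[of "t+x"]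
        by (simp add: par_pdf_def residual_pdf_def residual_cdf_def)
    qed
    show "(par_pdf (residual_pdf f F t) (residual_cdf F t) n has_integral
            par_cdf (residual_cdf F t) n x) {..x}"
    proof (cases "x < 0")
      case True
      have "(par_pdf (residual_pdf f F t) (residual_cdf F t) n has_integral 0) {..x}"
        by (rule has_integral_is_0) (use True in \<open>simp add: par_pdf_def residual_pdf_def\<close>)
      moreover have "par_cdf (residual_cdf F t) n x = 0"
        using True n by (simp add: par_cdf_def residual_cdf_def)
      ultimately show ?thesis by simp
    next
      case False
      then have x: "0 \<le> x" by simp
      define h where "h s = f s / (1 - F t)" for s
      have hI: "(h has_integral (F s - F t) / (1 - F t)) {t..s}" if "t \<le> s" for s
        using has_integral_divide[OF integrable_integral[OF fint[of t s]], of "1 - F t"]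
          Fdiff[OF t that] by (simp add: h_def[abs_def])
      have ch: "((\<lambda>s. real n * (0 + integral {t..s} h)^(n-1) * h s) has_integral
           ((0 + integral {t..t+x} h)^n - 0^n)) {t..t+x}"
        by (rule chain) (use x hI[of "t+x"] c1 fnn in \<open>auto simp: h_def has_integral_integrable\<close>)
      have "((\<lambda>s. real n * (0 + integral {t..t+s} h)^(n-1) * h (t+s)) has_integral
           ((0 + integral {t..t+x} h)^n - 0^n)) {0..x}"
        using shift_int[OF ch] by simp
      moreover have "real n * (0 + integral {t..t+s} h)^(n-1) * h (t+s) =
                     par_pdf (residual_pdf f F t) (residual_cdf F t) n s" if "s \<in> {0..x}" for s
      proof -
        have "integral {t..t+s} h = (F(t+s) - F t)/(1-F t)" using that by (intro integral_unique hI) simp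
        then show ?thesis using that by (simp add: par_pdf_def residual_pdf_def residual_cdf_def h_def)
      qed
      moreover have "(0 + integral {t..t+x} h)^n - 0^n = par_cdf (residual_cdf F t) n x"
      proof -
        have "integral {t..t+x} h = (F(t+x) - F t)/(1-F t)" using x by (intro integral_unique hI) simp
        then show ?thesis using x n by (simp add: par_cdf_def residual_cdf_def)
      qed
      ultimately have "(par_pdf (residual_pdf f F t) (residual_cdf F t) n has_integral
            par_cdf (residual_cdf F t) n x) {0..x}"
        using has_integral_cong by (metis (no_types, lifting))
      then show ?thesis
        by (rule extend_int[OF _ x]) (simp add: par_pdf_def residual_pdf_def)
    qed
  qed
  have P2: "is_density (residual_pdf (par_pdf f F n) (par_cdf F n) t)
                    (residual_cdf (par_cdf F n) t)"
    unfolding is_density_def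
  proof (intro conjI allI)
    fix x :: real
    show "0 \<le> residual_pdf (par_pdf f F n) (par_cdf F n) t x"
      using c2 fnn[of "t+x"] Fnn[of "t+x"]
      by (simp add: par_pdf_def residual_pdf_def par_cdf_def)
    show "(residual_pdf (par_pdf f F n) (par_cdf F n) t has_integral
            residual_cdf (par_cdf F n) t x) {..x}"
    proof (cases "x < 0")
      case True
      have "(residual_pdf (par_pdf f F n) (par_cdf F n) t has_integral 0) {..x}"
        by (rule has_integral_is_0) (use True in \<open>simp add: residual_pdf_def\<close>)
      moreover have "residual_cdf (par_cdf F n) t x = 0"
        using True by (simp add: residual_cdf_def)
      ultimately show ?thesis by simp
    next
      case False
      then have x: "0 \<le> x" by simp
      have fI: "integral {t..s} f = F s - F t" if "t \<le> s" for s
        using Fdiff[OF t that] by simp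
      have ch: "((\<lambda>s. real n * (F t + integral {t..s} f)^(n-1) * f s) has_integral
           ((F t + integral {t..t+x} f)^n - F t^n)) {t..t+x}"
        by (rule chain) (use x fint fnn Fnn in auto)
      have "((\<lambda>s. real n * (F t + integral {t..t+s} f)^(n-1) * f (t+s) / (1 - F t ^ n)) has_integral
           ((F t + integral {t..t+x} f)^n - F t^n) / (1 - F t ^ n)) {0..x}"
        using shift_int[OF has_integral_divide[OF ch]] by simp
      moreover have "real n * (F t + integral {t..t+s} f)^(n-1) * f (t+s) / (1 - F t ^ n) =
                     residual_pdf (par_pdf f F n) (par_cdf F n) t s" if "s \<in> {0..x}" for s
        using that fI[of "t+s"] by (simp add: par_pdf_def residual_pdf_def par_cdf_def)
      moreover have "((F t + integral {t..t+x} f)^n - F t^n) / (1 - F t ^ n) = residual_cdf (par_cdf F n) t x"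
        using x fI[of "t+x"] by (simp add: par_cdf_def residual_cdf_def)
      ultimately have "(residual_pdf (par_pdf f F n) (par_cdf F n) t has_integral
            residual_cdf (par_cdf F n) t x) {0..x}"
        using has_integral_cong by (metis (no_types, lifting))
      then show ?thesis
        by (rule extend_int[OF _ x]) (simp add: residual_pdf_def)
    qed
  qed

  have key: "rhr (par_pdf (residual_pdf f F t) (residual_cdf F t) n) (par_cdf (residual_cdf F t) n) z /
             rhr (residual_pdf (par_pdf f F n) (par_cdf F n) t) (residual_cdf (par_cdf F n) t) z
           = (\<Sum>p<n. (F t / F (t+z))^(n - 1 - p))" if z: "0 < z" for z
  proof -
    have e1: "par_pdf (residual_pdf f F t) (residual_cdf F t) n z =
        real n * ((F(t+z) - F t)/(1 - F t))^(n - 1) * (f (t+z)/(1 - F t))"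
      using z by (simp add: par_pdf_def residual_pdf_def residual_cdf_def)
    have e2: "par_cdf (residual_cdf F t) n z = ((F(t+z) - F t)/(1 - F t))^n"
      using z by (simp add: par_cdf_def residual_cdf_def)
    have e3: "residual_pdf (par_pdf f F n) (par_cdf F n) t z =
        real n * F(t+z)^(n - 1) * f (t+z) / (1 - F t^n)"
      using z by (simp add: par_pdf_def residual_pdf_def par_cdf_def)
    have e4: "residual_cdf (par_cdf F n) t z = (F(t+z)^n - F t^n)/(1 - F t^n)"
      using z by (simp add: par_cdf_def residual_cdf_def)
    show ?thesis
      unfolding rhr_def e1 e2 e3 e4
      by (rule ratio_eq) (use Fnn Fstrict[OF t, of "t+z"] z Flt1 supp[of "t+z"] t n in auto)
  qed
  have P3: "rh_ratio_order (par_pdf (residual_pdf f F t) (residual_cdf F t) n)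
                        (par_cdf (residual_cdf F t) n)
                        (residual_pdf (par_pdf f F n) (par_cdf F n) t)
                        (residual_cdf (par_cdf F n) t)"
    unfolding rh_ratio_order_def
  proof (intro allI impI)
    fix x y :: real assume x: "0 < x" and xy: "x \<le> y"
    have ax: "F t < F (t+x)" using Fstrict[OF t, of "t+x"] x by simp
    have axy: "F (t+x) \<le> F (t+y)" using Fmono xy by simp
    have q: "F t / F (t+y) \<le> F t / F (t+x)"
      using Fnn[of t] ax axy by (intro divide_left_mono) auto
    have q0: "0 \<le> F t / F (t+y)" using Fnn[of t] Fnn[of "t+y"] by simp
    have "(\<Sum>p<n. (F t / F (t+y))^(n - 1 - p)) \<le> (\<Sum>p<n. (F t / F (t+x))^(n - 1 - p))"
      by (intro sum_mono power_mono q q0)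
    then show "rhr (par_pdf (residual_pdf f F t) (residual_cdf F t) n) (par_cdf (residual_cdf F t) n) y /
             rhr (residual_pdf (par_pdf f F n) (par_cdf F n) t) (residual_cdf (par_cdf F n) t) y
           \<le> rhr (par_pdf (residual_pdf f F t) (residual_cdf F t) n) (par_cdf (residual_cdf F t) n) x /
             rhr (residual_pdf (par_pdf f F n) (par_cdf F n) t) (residual_cdf (par_cdf F n) t) x"
      using key[OF x] key[of y] x xy by simp
  qed
  show ?thesis using P1 P2 P3 by blast
qed


end
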